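(* With the substitutions and matrices in the context, the vector $\mathbf{x}$ satisfies \[ \mathbf{x}(p'_n\pi_1(\mathbf{c}))=\frac{1-a_0}{1-b_n}\,p'_n(M_{\pi_1})\,M_{p'_n}\,\mathbf{x}(\mathbf{c}),\qquad a_0=q^{-1}a_{n+1}. \]
   Context: Fix an integer $n\ge1$ and $q\in\mathbb{C}$ with $0<|q|<1$. Let $a_1,\ldots,a_{n+1},b_1,\ldots,b_n,c$ be generic complex parameters, and write $\mathbf{c}=(a_1,\ldots,a_{n+1},b_1,\ldots,b_n,c)$. Set $b_{n+1}=q$, and extend indices to all of $\mathbb{Z}$ by $a_{j+n+1}=q\,a_j$ and $b_{j+n+1}=q\,b_j$; in particular $a_0=q^{-1}a_{n+1}$ and $b_0=1$. Write $(a;q)_0=1$ and $(a;q)_k=(1-a)(1-qa)\cdots(1-q^{k-1}a)$. For $j=1,\ldots,n+1$ let \[ x_j(\mathbf{c})=\prod_{l=1}^{n-j+1}(1-a_l)\prod_{l=n-j+2}^{n}(1-b_l)\sum_{k=0}^\infty q^kc^k\prod_{l=1}^{n-j+1}\frac{(qa_l;q)_k}{(qb_l;q)_k}\prod_{l=n-j+2}^{n+1}\frac{(a_l;q)_k}{(b_l;q)_k}, \] which converges for $|c|<|q|^{-1}$, and set $\mathbf{x}=(x_1,\ldots,x_{n+1})^T$. Let $E_{j_1,j_2}$ denote the $(n+1)\times(n+1)$ matrix unit. For a parameter $u$, $c^{\log_q u}$ means $\exp(\log c\,\log u/\log q)$ for fixed branches. Substitutions. Each symbol $\omega$ below denotes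 a substitution $\mathbf{c}\mapsto\omega(\mathbf{c})$, specified by the images of $a_j$ ($1\le j\le n+1$), $b_j$ ($1\le j\le n$) and $c$. Right-hand sides are read using the quasi-periodic convention; the same formulas then hold for all $j$, and $b_{n+1}=q$ stays fixed. For $i\in\mathbb{Z}$ let $t_i$ be the permutation of $\mathbb{Z}$ exchanging $i+k(n+1)$ and $i+1+k(n+1)$ for every $k\in\mathbb{Z}$ and fixing all other integers. - $p'_n$: $a_j\mapsto qa_j/b_n$, $b_j\mapsto qb_{t_n(j)}/b_n$, $c\mapsto c$. - $\pi_1$: $a_j\mapsto qa_{j-1}/b_n$, $b_j\mapsto qb_{j-1}/b_n$, $c\mapsto c$. For a function or matrix $\Phi(\mathbf{c})$, $\omega(\Phi)$ denotes $\Phi(\omega(\mathbf{c}))$. Compositions are defined by $(\omega_2\omega_1)(\Phi)=\omega_2(\omega_1(\Phi))$, i.e. $\omega_2\omega_1(\mathbf{c})$ is $\omega_1(\mathbf{c})$ with $\mathbf{c}$ replaced by $\omega_2(\mathbf{c})$. Matrices: - $M_{p'_n}=c^{\log_q(q^{-1}b_n)}\Bigl(\frac{b_n-a_{n+1}}{b_{n+1}-a_{n+1}}E_{1,1}+\sum_{j=2}^{n+1}E_{j,j}+\frac{b_{n+1}-b_n}{b_{n+1}-a_{n+1}}q^{-1}c^{-1}E_{1,n+1}\Bigr)$. - $M_{\pi_1}=c^{\log_q(q^{-1}b_n)}\Bigl(\sum_{j=1}^nE_{j,j+1}+qc\,E_{n+1,1}\Bigr)$. *)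

theory Defs
  imports "HOL-Analysis.Analysis"
begin

text \<open>Parameter tuples: a pair (a, b) of functions; only a 1, ..., a (n+1) and
  b 1, ..., b n are meaningful (b (n+1) = q is enforced by bfull).
  The parameter c is kept separately (it is not changed by the substitutions).\<close>

type_synonym params = "(nat \<Rightarrow> complex) \<times> (nat \<Rightarrow> complex)"

definition qpoch :: "complex \<Rightarrow> complex \<Rightarrow> nat \<Rightarrow> complex" where
  "qpoch a q k = (\<Prod>i<k. 1 - q ^ i * a)"

definition bfull :: "nat \<Rightarrow> complex \<Rightarrow> (nat \<Rightarrow> complex) \<Rightarrow> nat \<Rightarrow> complex" where
  "bfull n q b = b(Suc n := q)"

text \<open>Quasi-periodic extension to all integers: f_(j+n+1) = q f_j\<close>
definition qext :: "nat \<Rightarrow> complex \<Rightarrow> (nat \<Rightarrow> complex) \<Rightarrow> int \<Rightarrow> complex" where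
  "qext n q f j = (let m = int n + 1; r = (j - 1) mod m + 1
                   in q powi ((j - r) div m) * f (nat r))"

definition tperm :: "nat \<Rightarrow> int \<Rightarrow> int \<Rightarrow> int" where
  "tperm n i j = (if j mod (int n + 1) = i mod (int n + 1) then j + 1
                  else if j mod (int n + 1) = (i + 1) mod (int n + 1) then j - 1
                  else j)"

text \<open>c^(log_q u) = exp(log c * log u / log q), principal branches\<close>
definition qcpow :: "complex \<Rightarrow> complex \<Rightarrow> complex \<Rightarrow> complex" where
  "qcpow q c u = exp (Ln c * Ln u / Ln q)"

definition xfun :: "nat \<Rightarrow> complex \<Rightarrow> params \<Rightarrow> complex \<Rightarrow> nat \<Rightarrow> complex" where
  "xfun n q p c j =
     (let a = fst p; b = bfull n q (snd p) in
      (\<Prod>l = 1..n + 1 - j. 1 - a l) * (\<Prod>l = n + 2 - j..n. 1 - b l) *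
      (\<Sum>k. q ^ k * c ^ k *
         (\<Prod>l = 1..n + 1 - j. qpoch (q * a l) q k / qpoch (q * b l) q k) *
         (\<Prod>l = n + 2 - j..n + 1. qpoch (a l) q k / qpoch (b l) q k)))"

definition subst_pn :: "nat \<Rightarrow> complex \<Rightarrow> params \<Rightarrow> params" where
  "subst_pn n q p =
     (let a = fst p; b = snd p in
      (\<lambda>j. q * a j / b n,
       \<lambda>j. q * qext n q (bfull n q b) (tperm n (int n) (int j)) / b n))"

definition subst_pi1 :: "nat \<Rightarrow> complex \<Rightarrow> params \<Rightarrow> params" where
  "subst_pi1 n q p =
     (let a = fst p; b = snd p in
      (\<lambda>j. q * qext n q a (int j - 1) / b n,
       \<lambda>j. q * qext n q (bfull n q b) (int j - 1) / b n))"

text \<open>(n+1)x(n+1) matrices as functions on indices 1..n+1\<close>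
definition mat_mult :: "nat \<Rightarrow> (nat \<Rightarrow> nat \<Rightarrow> complex) \<Rightarrow> (nat \<Rightarrow> nat \<Rightarrow> complex) \<Rightarrow> nat \<Rightarrow> nat \<Rightarrow> complex" where
  "mat_mult n A B i j = (\<Sum>k = 1..n + 1. A i k * B k j)"

definition mat_vec :: "nat \<Rightarrow> (nat \<Rightarrow> nat \<Rightarrow> complex) \<Rightarrow> (nat \<Rightarrow> complex) \<Rightarrow> nat \<Rightarrow> complex" where
  "mat_vec n A v i = (\<Sum>k = 1..n + 1. A i k * v k)"

definition Eu :: "nat \<Rightarrow> nat \<Rightarrow> nat \<Rightarrow> nat \<Rightarrow> complex" where
  "Eu j1 j2 i j = (if i = j1 \<and> j = j2 then 1 else 0)"

definition M_pn :: "nat \<Rightarrow> complex \<Rightarrow> params \<Rightarrow> complex \<Rightarrow> nat \<Rightarrow> nat \<Rightarrow> complex" where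
  "M_pn n q p c i j =
     (let a = fst p; b = bfull n q (snd p) in
      qcpow q c (b n / q) *
      ((b n - a (n + 1)) / (b (n + 1) - a (n + 1)) * Eu 1 1 i j
       + (\<Sum>l = 2..n + 1. Eu l l i j)
       + (b (n + 1) - b n) / (b (n + 1) - a (n + 1)) * inverse q * inverse c * Eu 1 (n + 1) i j))"

definition M_pi1 :: "nat \<Rightarrow> complex \<Rightarrow> params \<Rightarrow> complex \<Rightarrow> nat \<Rightarrow> nat \<Rightarrow> complex" where
  "M_pi1 n q p c i j =
     (let b = bfull n q (snd p) in
      qcpow q c (b n / q) *
      ((\<Sum>l = 1..n. Eu l (l + 1) i j) + q * c * Eu (n + 1) 1 i j))"

end

theory Submission
  imports Defs
begin

lemma qext_in: "1 \<le> j \<Longrightarrow> j \<le> n+1 \<Longrightarrow> qext n q f (int j) = f j"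
  unfolding qext_def Let_def
  by (simp add: mod_pos_pos_trivial)

lemma qext_0: "qext n q f 0 = inverse q * f (n+1)"
proof -
  have m: "(-1::int) mod (int n + 1) = int n"
    by (simp add: zmod_minus1)
  have e: "(- int n - 1) = (-1) * (int n + 1)" by simp
  have d: "(- int n - 1) div (int n + 1) = -1" unfolding e
    by (subst nonzero_mult_div_cancel_right) auto
  show ?thesis unfolding qext_def Let_def using m d
    by (simp add: power_int_minus nat_add_distrib)
qed

lemma tperm_n: "tperm n (int n) (int n) = int n + 1"
  unfolding tperm_def by simp

lemma tperm_lt: "1 \<le> l \<Longrightarrow> l < n \<Longrightarrow> tperm n (int n) (int l) = int l"
  unfolding tperm_def by (simp add: mod_pos_pos_trivial)


lemma p1_fst: "fst (subst_pn n q (a,b)) l = q * a l / b n"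
  unfolding subst_pn_def by simp

lemma p1_snd_n: "snd (subst_pn n q (a,b)) n = q * q / b n"
proof -
  have "qext n q (bfull n q b) (int n + 1) = q"
    using qext_in[of "Suc n" n q "bfull n q b"] by (simp add: bfull_def add.commute)
  then show ?thesis unfolding subst_pn_def Let_def by (simp add: tperm_n)
qed

lemma p1_snd_lt: "1 \<le> l \<Longrightarrow> l < n \<Longrightarrow> snd (subst_pn n q (a,b)) l = q * b l / b n"
  unfolding subst_pn_def Let_def
  by (simp add: tperm_lt qext_in bfull_def)

definition "A2 n q a b = fst (subst_pi1 n q (subst_pn n q (a, b)))"
definition "B2 n q a b = bfull n q (snd (subst_pi1 n q (subst_pn n q (a, b))))"

lemma A2_1: "q \<noteq> 0 \<Longrightarrow> b n \<noteq> 0 \<Longrightarrow> A2 n q a b 1 = a (n+1) / q"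
  unfolding A2_def subst_pi1_def Let_def
  by (simp add: qext_0 p1_fst p1_snd_n field_simps)

lemma A2_Suc: "q \<noteq> 0 \<Longrightarrow> b n \<noteq> 0 \<Longrightarrow> 1 \<le> l \<Longrightarrow> l \<le> n \<Longrightarrow> A2 n q a b (Suc l) = a l"
  unfolding A2_def subst_pi1_def Let_def
  by (simp add: qext_in p1_fst p1_snd_n field_simps)

lemma B2_1: "q \<noteq> 0 \<Longrightarrow> b n \<noteq> 0 \<Longrightarrow> 1 \<le> n \<Longrightarrow> B2 n q a b 1 = b n / q"
  unfolding B2_def subst_pi1_def Let_def
  by (simp add: qext_0 p1_snd_n bfull_def field_simps)

lemma B2_Suc: "q \<noteq> 0 \<Longrightarrow> b n \<noteq> 0 \<Longrightarrow> 1 \<le> l \<Longrightarrow> l < n \<Longrightarrow> B2 n q a b (Suc l) = b l"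
  unfolding B2_def subst_pi1_def Let_def
  by (simp add: qext_in p1_snd_lt p1_snd_n bfull_def field_simps)

lemma B2_n1: "B2 n q a b (n+1) = q"
  unfolding B2_def by (simp add: bfull_def)

lemma mv_mm: "mat_vec n (mat_mult n A B) v i = mat_vec n A (mat_vec n B v) i"
proof -
  have "mat_vec n (mat_mult n A B) v i = (\<Sum>k = 1..n + 1. \<Sum>m = 1..n + 1. A i m * B m k * v k)"
    unfolding mat_vec_def mat_mult_def by (simp only: sum_distrib_right)
  also have "\<dots> = (\<Sum>m = 1..n + 1. \<Sum>k = 1..n + 1. A i m * B m k * v k)"
    by (rule sum.swap)
  also have "\<dots> = mat_vec n A (mat_vec n B v) i"
    unfolding mat_vec_def by (simp only: sum_distrib_left mult.assoc)
  finally show ?thesis .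
qed

lemma sumE_diag: "(\<Sum>l = 2..n + 1. Eu l l i j) = (if i = j \<and> 2 \<le> i \<and> i \<le> n+1 then 1 else 0)"
proof (cases "i = j")
  case True
  then show ?thesis unfolding Eu_def by (simp add: sum.delta)
next
  case False
  have "(\<Sum>l = 2..n + 1. Eu l l i j) = 0" unfolding Eu_def by (rule sum.neutral) (use False in auto)
  then show ?thesis using False by simp
qed

lemma sumE_sup: "(\<Sum>l = 1..n. Eu l (l + 1) i j) = (if j = i + 1 \<and> 1 \<le> i \<and> i \<le> n then 1 else 0)"
proof (cases "j = i + 1")
  case True
  then show ?thesis unfolding Eu_def by (simp add: sum.delta)
next
  case False
  have "(\<Sum>l = 1..n. Eu l (l + 1) i j) = 0" unfolding Eu_def by (rule sum.neutral) (use False in auto)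
  then show ?thesis using False by simp
qed

lemma pn_entry:
  assumes "1 \<le> n"
  shows "M_pn n q (a,b) c i k = qcpow q c (b n / q) *
     (if i = 1 then (if k = 1 then (b n - a (n + 1)) / (q - a (n + 1)) else 0)
        + (if k = n + 1 then (q - b n) / (q - a (n + 1)) * inverse q * inverse c else 0)
      else if k = i \<and> 2 \<le> i \<and> i \<le> n+1 then 1 else 0)"
proof -
  show ?thesis
    using assms unfolding M_pn_def Let_def sumE_diag
    by (auto simp: Eu_def bfull_def)
qed

lemma mv_pn:
  assumes "1 \<le> n" "m \<in> {1..n+1}"
  shows "mat_vec n (M_pn n q (a,b) c) x m =
    qcpow q c (b n / q) * (if m = 1 then (b n - a (n + 1)) / (q - a (n + 1)) * x 1
        + (q - b n) / (q - a (n + 1)) * inverse q * inverse c * x (n+1) else x m)"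
proof (cases "m = 1")
  case True
  have "mat_vec n (M_pn n q (a,b) c) x m = (\<Sum>k = 1..n + 1. qcpow q c (b n / q) *
     ((if k = 1 then (b n - a (n + 1)) / (q - a (n + 1)) * x k else 0)
        + (if k = n + 1 then (q - b n) / (q - a (n + 1)) * inverse q * inverse c * x k else 0)))"
    unfolding mat_vec_def pn_entry[OF assms(1)] using True
    by (intro sum.cong) (auto simp: algebra_simps)
  also have "\<dots> = qcpow q c (b n / q) * ((b n - a (n + 1)) / (q - a (n + 1)) * x 1
        + (q - b n) / (q - a (n + 1)) * inverse q * inverse c * x (n+1))"
    by (simp add: sum.distrib sum_distrib_left[symmetric] sum.delta)
  finally show ?thesis using True by simp
next
  case False
  have "mat_vec n (M_pn n q (a,b) c) x m = (\<Sum>k = 1..n + 1. qcpow q c (b n / q) *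
     (if k = m then x k else 0))"
    unfolding mat_vec_def pn_entry[OF assms(1)] using False assms
    by (intro sum.cong) auto
  also have "\<dots> = qcpow q c (b n / q) * x m"
    using assms by (simp add: sum_distrib_left[symmetric] sum.delta)
  finally show ?thesis using False by simp
qed

lemma mv_pi1:
  assumes "1 \<le> n" "j \<in> {1..n+1}"
  shows "mat_vec n (M_pi1 n q p c) y j =
    qcpow q c (bfull n q (snd p) n / q) * (if j \<le> n then y (j+1) else q * c * y 1)"
proof -
  have "mat_vec n (M_pi1 n q p c) y j = (\<Sum>k = 1..n + 1. qcpow q c (bfull n q (snd p) n / q) *
     (if k = (if j \<le> n then j + 1 else 1) then (if j \<le> n then y k else q * c * y k) else 0))"
    unfolding mat_vec_def M_pi1_def Let_def sumE_sup using assms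
    by (intro sum.cong) (auto simp: Eu_def)
  also have "\<dots> = qcpow q c (bfull n q (snd p) n / q) * (if j \<le> n then y (j+1) else q * c * y 1)"
    using assms by (simp add: sum_distrib_left[symmetric] sum.delta)
  finally show ?thesis .
qed

lemma qpoch_0[simp]: "qpoch x q 0 = 1" by (simp add: qpoch_def)

lemma qpoch_Suc: "qpoch x q (Suc k) = qpoch x q k * (1 - q^k * x)"
  by (simp add: qpoch_def)

lemma qpoch_Suc': "qpoch x q (Suc k) = (1 - x) * qpoch (q*x) q k"
  unfolding qpoch_def prod.lessThan_Suc_shift by (simp add: mult_ac)

lemma qfrac_lim:
  fixes q :: complex
  assumes "norm q < 1"
  shows "(\<lambda>k. (1 - q^k * x) / (1 - q^k * y)) \<longlonglongrightarrow> 1"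
proof -
  have "(\<lambda>k. q^k) \<longlonglongrightarrow> 0" using assms by (rule LIMSEQ_power_zero)
  then have "(\<lambda>k. (1 - q^k * x) / (1 - q^k * y)) \<longlonglongrightarrow> (1 - 0 * x) / (1 - 0 * y)"
    using assms by (intro tendsto_intros) auto
  then show ?thesis by simp
qed

lemma summable_qterm:
  fixes u v u' v' :: "nat \<Rightarrow> complex" and q z :: complex
  assumes "finite I" "finite J" "norm q < 1" "norm z < 1"
  shows "summable (\<lambda>k. z^k * (\<Prod>l\<in>I. qpoch (u l) q k / qpoch (v l) q k)
                              * (\<Prod>l\<in>J. qpoch (u' l) q k / qpoch (v' l) q k))"
    (is "summable ?f")
proof -
  define r where "r k = z * (\<Prod>l\<in>I. (1 - q^k * u l) / (1 - q^k * v l))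
                         * (\<Prod>l\<in>J. (1 - q^k * u' l) / (1 - q^k * v' l))" for k
  have rec: "?f (Suc k) = ?f k * r k" for k
    unfolding r_def qpoch_Suc
    by (simp only: qpoch_Suc times_divide_times_eq[symmetric] prod.distrib power_Suc) (simp only: mult_ac)
  have l1: "(\<lambda>k. \<Prod>l\<in>I. (1 - q^k * u l) / (1 - q^k * v l)) \<longlonglongrightarrow> (\<Prod>l\<in>I. 1)"
    by (rule tendsto_prod) (rule qfrac_lim[OF assms(3)])
  have l2: "(\<lambda>k. \<Prod>l\<in>J. (1 - q^k * u' l) / (1 - q^k * v' l)) \<longlonglongrightarrow> (\<Prod>l\<in>J. 1)"
    by (rule tendsto_prod) (rule qfrac_lim[OF assms(3)])
  have "r \<longlonglongrightarrow> z * (\<Prod>l\<in>I. 1) * (\<Prod>l\<in>J. 1)"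
    unfolding r_def by (intro tendsto_mult tendsto_const l1 l2)
  then have lim: "r \<longlonglongrightarrow> z" by simp
  define c where "c = (1 + norm z) / 2"
  have "c < 1" "norm z < c" using assms(4) by (auto simp: c_def)
  have "(\<lambda>k. norm (r k)) \<longlonglongrightarrow> norm z" using lim by (rule tendsto_norm)
  then have "eventually (\<lambda>k. norm (r k) < c) sequentially"
    using \<open>norm z < c\<close> by (rule order_tendstoD)
  then obtain N where N: "\<And>k. k \<ge> N \<Longrightarrow> norm (r k) < c"
    by (auto simp: eventually_sequentially)
  show ?thesis
  proof (rule summable_ratio_test[OF \<open>c < 1\<close>])
    fix k assume "k \<ge> N"
    have "norm (r k) * norm (?f k) \<le> c * norm (?f k)"
      using N[of k] \<open>k \<ge> N\<close> by (intro mult_right_mono) auto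
    then have "norm (?f k) * norm (r k) \<le> c * norm (?f k)"
      by (simp only: mult.commute[of "norm (?f k)" "norm (r k)"])
    then show "norm (?f (Suc k)) \<le> c * norm (?f k)"
      by (simp only: rec norm_mult)
  qed
qed

lemma P1: "(\<Prod>l=1..Suc J. f l) = f 1 * (\<Prod>l=1..J. f (Suc l))"
proof -
  have "(\<Prod>l=1..Suc J. f l) = f 1 * (\<Prod>l=Suc 1..Suc J. f l)"
    by (rule prod.atLeast_Suc_atMost) simp
  also have "(\<Prod>l=Suc 1..Suc J. f l) = (\<Prod>l=1..J. f (Suc l))"
    by (rule prod.shift_bounds_cl_Suc_ivl)
  finally show ?thesis .
qed

lemma P2: "1 \<le> n \<Longrightarrow> (\<Prod>l=Suc (Suc J)..n. f l) = (\<Prod>l=Suc J..n-1. f (Suc l))"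
  using prod.shift_bounds_cl_Suc_ivl[of f "Suc J" "n - 1"] by simp

lemma P4: "Suc J \<le> n \<Longrightarrow> (\<Prod>l=Suc J..n. f l) = (\<Prod>l=Suc J..n-1. f l) * f n"
proof -
  assume h: "Suc J \<le> n"
  then have "n = Suc (n - 1)" by simp
  then have "(\<Prod>l=Suc J..n. f l) = (\<Prod>l=Suc J..Suc (n-1). f l)" by simp
  also have "\<dots> = (\<Prod>l=Suc J..n-1. f l) * f (Suc (n-1))"
    using h by (subst prod.cl_ivl_Suc) auto
  finally show ?thesis using h by simp
qed

lemma P3: "Suc J \<le> n \<Longrightarrow> (\<Prod>l=Suc (Suc J)..n+1. f l) = (\<Prod>l=Suc J..n-1. f (Suc l)) * f (n+1)"
proof -
  assume h: "Suc J \<le> n"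
  have "(\<Prod>l=Suc (Suc J)..Suc n. f l) = (\<Prod>l=Suc (Suc J)..n. f l) * f (Suc n)"
    using h by (subst prod.cl_ivl_Suc) auto
  then show ?thesis using P2[where n=n and J=J and f=f] h by simp
qed

lemma P5: "Suc J \<le> n \<Longrightarrow> (\<Prod>l=Suc J..n+1. f l) = (\<Prod>l=Suc J..n-1. f l) * f n * f (n+1)"
proof -
  assume h: "Suc J \<le> n"
  have "(\<Prod>l=Suc J..Suc n. f l) = (\<Prod>l=Suc J..n. f l) * f (Suc n)"
    using h by (subst prod.cl_ivl_Suc) auto
  then show ?thesis using P4[OF h, where f=f] by simp
qed

lemma alg_lt:
  fixes q A B P1 P2 :: complex
  assumes "B \<noteq> 1" "q \<noteq> 0"
  shows "(1 - A / q) * P1 * P2 * (\<Sum>k. z k * (x1 k / y1 k * X k) * (Y k * (x2 k / y2 k)))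
    = (1 - inverse q * A) / (1 - B) * (P1 * (P2 * (1 - B)) *
        (\<Sum>k. z k * X k * (Y k * (x2 k / y1 k) * (x1 k / y2 k))))"
proof -
  have "(\<lambda>k. z k * (x1 k / y1 k * X k) * (Y k * (x2 k / y2 k))) = (\<lambda>k. z k * X k * (Y k * (x2 k / y1 k) * (x1 k / y2 k)))"
    by (rule ext) (simp add: times_divide_times_eq mult_ac)
  then show ?thesis using assms by (simp add: field_simps)
qed

lemma case_lt:
  assumes n1: "1 \<le> n" and q0: "q \<noteq> 0" and bn0: "b n \<noteq> 0" and bn1: "b n \<noteq> 1" and J: "J < n"
  shows "xfun n q (subst_pi1 n q (subst_pn n q (a, b))) c (n - J)
       = (1 - inverse q * a (n+1)) / (1 - b n) * xfun n q (a,b) c (n - J + 1)"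
proof -
  define A where "A = A2 n q a b"
  define B where "B = B2 n q a b"
  define Bf where "Bf = bfull n q b"
  have e1: "n + 1 - (n - J) = Suc J" "n + 2 - (n - J) = Suc (Suc J)"
     "n + 1 - (n - J + 1) = J" "n + 2 - (n - J + 1) = Suc J" using J by auto
  have hJ: "Suc J \<le> n" using J by simp
  have Av: "\<And>l. l \<in> {1..n} \<Longrightarrow> A (Suc l) = a l" using A2_Suc[where q=q and b=b and n=n, OF q0 bn0] unfolding A_def by auto
  have Bv: "\<And>l. l \<in> {1..n-1} \<Longrightarrow> B (Suc l) = b l" using B2_Suc[where q=q and b=b and n=n, OF q0 bn0] unfolding B_def by auto
  have A1: "A 1 = a (n+1) / q" unfolding A_def using A2_1[where q=q and b=b and n=n, OF q0 bn0] .
  have B1: "B 1 = b n / q" unfolding B_def using B2_1[where q=q and b=b and n=n, OF q0 bn0 n1] .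
  have Bn1: "B (n+1) = q" unfolding B_def by (rule B2_n1)
  have Bfv: "\<And>l. l \<le> n \<Longrightarrow> Bf l = b l" "Bf (n+1) = q" unfolding Bf_def bfull_def by auto
  have xn: "xfun n q (subst_pi1 n q (subst_pn n q (a, b))) c (n - J) =
     (\<Prod>l=1..Suc J. 1 - A l) * (\<Prod>l=Suc (Suc J)..n. 1 - B l) *
     (\<Sum>k. q^k * c^k * (\<Prod>l=1..Suc J. qpoch (q * A l) q k / qpoch (q * B l) q k) *
        (\<Prod>l=Suc (Suc J)..n+1. qpoch (A l) q k / qpoch (B l) q k))"
    unfolding xfun_def Let_def A_def B_def A2_def B2_def e1 by simp
  have xo: "xfun n q (a, b) c (n - J + 1) =
     (\<Prod>l=1..J. 1 - a l) * (\<Prod>l=Suc J..n. 1 - Bf l) *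
     (\<Sum>k. q^k * c^k * (\<Prod>l=1..J. qpoch (q * a l) q k / qpoch (q * Bf l) q k) *
        (\<Prod>l=Suc J..n+1. qpoch (a l) q k / qpoch (Bf l) q k))"
    unfolding xfun_def Let_def Bf_def e1 by simp
  have AvJ: "\<And>l. l \<in> {1..J} \<Longrightarrow> A (Suc l) = a l" using Av J by auto
  have AvM: "\<And>l. l \<in> {Suc J..n-1} \<Longrightarrow> A (Suc l) = a l" using Av J by auto
  have BvJ: "\<And>l. l \<in> {1..J} \<Longrightarrow> B (Suc l) = Bf l" using Bv Bfv J by auto
  have BvM: "\<And>l. l \<in> {Suc J..n-1} \<Longrightarrow> B (Suc l) = Bf l" using Bv Bfv J by auto
  have An: "A (n+1) = a n" using Av[of n] n1 by simp
  have qA: "q * (a (n + 1) / q) = a (n+1)" "q * (b n / q) = b n" using q0 by auto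
  show ?thesis
    unfolding xn xo P1[of _ J] P2[OF n1] P3[OF hJ] P4[OF hJ] P5[OF hJ]
    apply (simp only: A1 B1 Bn1 An Bfv(2) Bfv(1)[OF order_refl] qA cong: prod.cong)
    apply (simp only: AvJ AvM BvJ BvM cong: prod.cong)
    by (rule alg_lt[OF bn1 q0])
qed

lemma sum_comb:
  fixes G N T :: "nat \<Rightarrow> complex"
  assumes "G sums SG" "N sums SN"
    and "\<And>k. T (Suc k) = K * (\<alpha> * G k + \<beta> * N (Suc k))" "T 0 = K * \<beta> * N 0"
  shows "T sums (K * (\<alpha> * SG + \<beta> * SN))"
proof -
  have "(\<lambda>k. N (Suc k)) sums (SN - N 0)"
    using assms(2) by (subst sums_Suc_iff) simp
  then have "(\<lambda>k. K * (\<alpha> * G k + \<beta> * N (Suc k))) sums (K * (\<alpha> * SG + \<beta> * (SN - N 0)))"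
    by (intro sums_mult sums_add assms(1))
  then have "(\<lambda>k. T (Suc k)) sums (K * (\<alpha> * SG + \<beta> * (SN - N 0)))"
    using assms(3) by simp
  then have "T sums (K * (\<alpha> * SG + \<beta> * (SN - N 0)) + T 0)"
    by (subst sums_Suc_iff[symmetric])
  then show ?thesis using assms(4) by (simp add: algebra_simps)
qed

lemma term_id:
  fixes q A B X Y :: complex
  assumes "q \<noteq> 0" "B \<noteq> q" "B \<noteq> 1" "A \<noteq> q" "Y \<noteq> 0" "1 - q^k * B \<noteq> 0" "1 - q^k * q \<noteq> 0" "c \<noteq> 0"
  shows "(1 - B/q) * X * ((1 - A/q) * Z / ((1 - B/q) * Y)) =
    (1 - inverse q * A) / (1 - B) * ((B - A) / (q - A) * ((1 - B) * X * Z * (1 - q^k * q) / (Y * (1 - q^k * B)))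
       + (q - B) / (q - A) * inverse q * inverse c * (q * c) * ((1 - B) * X * (Z * (1 - q^k * A)) / (Y * (1 - q^k * B))))"
proof -
  have h: "(B - A) * (1 - q^k * q) + (q - B) * (1 - q^k * A) = (q - A) * (1 - q^k * B)"
    by (simp add: algebra_simps)
  have qA: "q - A \<noteq> 0" "1 - B \<noteq> 0" "1 - B/q \<noteq> 0" using assms by (auto simp: field_simps)
  have ic: "\<And>W. W * inverse q * inverse c * (q * c) = W" using assms by (simp add: field_simps)
  define u where "u = X * Z / Y"
  have l: "(1 - B/q) * X * ((1 - A/q) * Z / ((1 - B/q) * Y)) = (1 - A/q) * u"
    unfolding u_def using qA assms by (simp add: field_simps)
  have r1: "(1 - B) * X * Z * (1 - q^k * q) / (Y * (1 - q^k * B)) = (1 - B) * u * (1 - q^k * q) / (1 - q^k * B)"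
    unfolding u_def using qA assms by (simp add: field_simps)
  have r2: "(1 - B) * X * (Z * (1 - q^k * A)) / (Y * (1 - q^k * B)) = (1 - B) * u * (1 - q^k * A) / (1 - q^k * B)"
    unfolding u_def using qA assms by (simp add: field_simps)
  have r3: "(B - A) / (q - A) * ((1 - B) * u * (1 - q^k * q) / (1 - q^k * B)) + (q - B) / (q - A) * ((1 - B) * u * (1 - q^k * A) / (1 - q^k * B))
     = (1 - B) * u / ((q - A) * (1 - q^k * B)) * ((B - A) * (1 - q^k * q) + (q - B) * (1 - q^k * A))"
    apply (simp only: times_divide_times_eq)
    apply (simp only: times_divide_eq_left add_divide_distrib[symmetric])
    by (rule arg_cong[where f="\<lambda>x. x / _"]) (simp add: algebra_simps)
  also have "\<dots> = (1 - B) * u"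
  proof -
    have "(q - A) * (1 - q^k * B) \<noteq> 0" using qA assms by simp
    then show ?thesis unfolding h by simp
  qed
  finally have r4: "(B - A) / (q - A) * ((1 - B) * u * (1 - q^k * q) / (1 - q^k * B)) + (q - B) / (q - A) * ((1 - B) * u * (1 - q^k * A) / (1 - q^k * B)) = (1 - B) * u" .
  have r5: "(1 - inverse q * A) / (1 - B) * ((1 - B) * u) = (1 - A/q) * u"
    using qA assms by (simp add: field_simps)
  show ?thesis unfolding l r1 r2 ic r4 r5 ..
qed

lemma qpoch_nz: "(\<And>i. i < k \<Longrightarrow> 1 - q^i * x \<noteq> 0) \<Longrightarrow> qpoch x q k \<noteq> 0"
  unfolding qpoch_def by (simp add: prod_zero_iff)

lemma one_minus_qpow: "norm (q::complex) < 1 \<Longrightarrow> 1 - q^i * q \<noteq> 0"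
proof
  assume h: "norm q < 1" "1 - q^i * q = 0"
  then have "q^(Suc i) = 1" by (simp add: algebra_simps)
  then have "norm q ^ Suc i = 1" by (metis norm_one norm_power)
  moreover have "norm q ^ Suc i < 1" using h(1) power_less_one_iff[of "norm q" "Suc i"] by simp
  ultimately show False by simp
qed

lemma summable_xterm:
  fixes I J :: "nat set"
  assumes "finite I" "finite J" "norm q < 1" "norm (q * c) < 1"
  shows "summable (\<lambda>k. q^k * c^k * (\<Prod>l\<in>I. qpoch (u l) q k / qpoch (v l) q k)
                              * (\<Prod>l\<in>J. qpoch (u' l) q k / qpoch (v' l) q k))"
  using summable_qterm[OF assms(1,2,3,4), of u v u' v'] by (simp add: power_mult_distrib)

lemma prod_shift_q:
  assumes "\<And>l. l \<in> S \<Longrightarrow> 1 - v l \<noteq> 0"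
  shows "(\<Prod>l\<in>S. 1 - u l) * (\<Prod>l\<in>S. qpoch (q * u l) q k / qpoch (q * v l) q k)
       = (\<Prod>l\<in>S. 1 - v l) * (\<Prod>l\<in>S. qpoch (u l) q (Suc k) / qpoch (v l) q (Suc k))"
proof -
  have "(\<Prod>l\<in>S. 1 - u l) * (\<Prod>l\<in>S. qpoch (q * u l) q k / qpoch (q * v l) q k)
      = (\<Prod>l\<in>S. (1 - u l) * (qpoch (q * u l) q k / qpoch (q * v l) q k))"
    by (simp only: prod.distrib)
  also have "\<dots> = (\<Prod>l\<in>S. (1 - v l) * (qpoch (u l) q (Suc k) / qpoch (v l) q (Suc k)))"
  proof (rule prod.cong[OF refl])
    fix l assume "l \<in> S"
    then have "1 - v l \<noteq> 0" by (rule assms)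
    then show "(1 - u l) * (qpoch (q * u l) q k / qpoch (q * v l) q k) =
          (1 - v l) * (qpoch (u l) q (Suc k) / qpoch (v l) q (Suc k))"
    proof -
      have "(1 - v l) * ((1 - u l) * qpoch (q * u l) q k / ((1 - v l) * qpoch (q * v l) q k))
          = ((1 - v l) * inverse (1 - v l)) * ((1 - u l) * qpoch (q * u l) q k * inverse (qpoch (q * v l) q k))"
        by (simp only: divide_inverse inverse_mult_distrib mult_ac)
      also have "\<dots> = (1 - u l) * (qpoch (q * u l) q k / qpoch (q * v l) q k)"
        using \<open>1 - v l \<noteq> 0\<close> by (simp add: divide_inverse mult_ac)
      finally show ?thesis unfolding qpoch_Suc' by simp
    qed
  qed
  also have "\<dots> = (\<Prod>l\<in>S. 1 - v l) * (\<Prod>l\<in>S. qpoch (u l) q (Suc k) / qpoch (v l) q (Suc k))"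
    by (simp only: prod.distrib)
  finally show ?thesis .
qed

lemma alg_g:
  fixes A B P Qs an y d w e q c qk ck :: complex
  assumes "y \<noteq> 0" "d \<noteq> 0" "w \<noteq> 0" "e \<noteq> 0"
  shows "q * c * qk * ck * (A / y) * (P * (1 - B) * (Qs * (an / (w * e))))
       = (1 - B) * (P * (q * qk * (c * ck) * Qs * (an / (y * d)))) * A * d / (w * e)"
  using assms by (simp add: field_simps)

lemma alg_kb:
  fixes q A B :: complex
  assumes "q \<noteq> 0" "q - A \<noteq> 0" "1 - B \<noteq> 0"
  shows "(1 - inverse q * A) / (1 - B) * ((q - B) / (q - A)) * (1 - B) = 1 - B / q"
proof -
  have e: "1 - inverse q * A = (q - A) / q" using assms by (simp add: field_simps)
  have "(1 - inverse q * A) / (1 - B) * ((q - B) / (q - A)) * (1 - B)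
      = ((q - A) / (q - A)) * ((1 - B) / (1 - B)) * ((q - B) / q)"
    unfolding e by (simp only: divide_inverse mult_ac)
  also have "\<dots> = (q - B) / q"
  proof -
    have "(q - A) / (q - A) = 1" "(1 - B) / (1 - B) = 1" using assms by auto
    then show ?thesis by simp
  qed
  also have "\<dots> = 1 - B / q" using assms by (simp add: field_simps)
  finally show ?thesis .
qed

lemma case_n1:
  assumes n1: "1 \<le> n" and q0: "q \<noteq> 0" and nq: "norm q < 1" and c0: "c \<noteq> 0"
    and nqc: "norm (q * c) < 1" and bl: "\<And>l. l \<in> {1..n} \<Longrightarrow> b l \<noteq> 1"
    and bnq: "b n \<noteq> q" and bnk: "\<And>k. 1 - q^k * b n \<noteq> 0" and bn0: "b n \<noteq> 0"
    and aq: "a (n+1) \<noteq> q"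
  shows "xfun n q (subst_pi1 n q (subst_pn n q (a, b))) c (n+1) =
     (1 - inverse q * a (n + 1)) / (1 - b n) * (q * c * ((b n - a (n + 1)) / (q - a (n + 1)) * xfun n q (a,b) c 1
        + (q - b n) / (q - a (n + 1)) * inverse q * inverse c * xfun n q (a,b) c (n+1)))"
proof -
  define A where "A = A2 n q a b"
  define B where "B = B2 n q a b"
  define Bf where "Bf = bfull n q b"
  define An1 where "An1 = a (n+1)"
  define Bn where "Bn = b n"
  define Q where "Q m = (\<Prod>l=1..n-1. qpoch (a l) q m / qpoch (b l) q m)" for m
  define R where "R m = q^m * c^m * Q m * (qpoch (a n) q m / qpoch q q m)" for m
  define Pb where "Pb = (\<Prod>l=1..n-1. 1 - b l)"
  have hJ: "Suc 0 \<le> n" using n1 by simp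
  have nS: "n = Suc (n - 1)" using n1 by simp
  have Av: "\<And>l. l \<in> {1..n} \<Longrightarrow> A (Suc l) = a l" using A2_Suc[where q=q and b=b and n=n, OF q0 bn0] unfolding A_def by auto
  have Bv: "\<And>l. l \<in> {1..n-1} \<Longrightarrow> B (Suc l) = b l" using B2_Suc[where q=q and b=b and n=n, OF q0 bn0] unfolding B_def by auto
  have Av': "\<And>l. l \<in> {1..n-1} \<Longrightarrow> A (Suc l) = a l" using Av by auto
  have A1: "A 1 = An1 / q" unfolding A_def An1_def using A2_1[where q=q and b=b and n=n, OF q0 bn0] .
  have B1: "B 1 = Bn / q" unfolding B_def Bn_def using B2_1[where q=q and b=b and n=n, OF q0 bn0 n1] .
  have Bn1: "B (Suc n) = q" unfolding B_def using B2_n1 by simp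
  have An: "A (Suc n) = a n" using Av[of n] n1 by simp
  have Bfv: "\<And>l. l \<in> {1..n-1} \<Longrightarrow> Bf l = b l" "Bf n = Bn" "Bf (Suc n) = q"
    unfolding Bf_def Bn_def bfull_def by auto
  have Bf1: "\<And>l. l \<in> {1..n} \<Longrightarrow> 1 - Bf l \<noteq> 0" using bl unfolding Bf_def bfull_def by auto

  define tN where "tN k = q^k * c^k * (\<Prod>l\<in>{1..n + 1 - (n + 1)}. qpoch (q * a l) q k / qpoch (q * Bf l) q k) *
         (\<Prod>l\<in>{n + 2 - (n + 1)..n + 1}. qpoch (a l) q k / qpoch (Bf l) q k)" for k
  define t1 where "t1 k = q^k * c^k * (\<Prod>l\<in>{1..n + 1 - 1}. qpoch (q * a l) q k / qpoch (q * Bf l) q k) *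
         (\<Prod>l\<in>{n + 2 - 1..n + 1}. qpoch (a l) q k / qpoch (Bf l) q k)" for k
  define tn where "tn k = q^k * c^k * (\<Prod>l\<in>{1..n + 1 - (n + 1)}. qpoch (q * A l) q k / qpoch (q * B l) q k) *
         (\<Prod>l\<in>{n + 2 - (n + 1)..n + 1}. qpoch (A l) q k / qpoch (B l) q k)" for k
  have sN: "summable tN" unfolding tN_def by (rule summable_xterm) (use nq nqc in auto)
  have s1: "summable t1" unfolding t1_def by (rule summable_xterm) (use nq nqc in auto)
  have sn: "summable tn" unfolding tn_def by (rule summable_xterm) (use nq nqc in auto)
  have xN: "xfun n q (a,b) c (n+1) = (\<Prod>l=1..n. 1 - Bf l) * suminf tN"
    unfolding xfun_def Let_def tN_def Bf_def by simp
  have x1: "xfun n q (a,b) c 1 = (\<Prod>l=1..n. 1 - a l) * suminf t1"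
    unfolding xfun_def Let_def t1_def Bf_def by simp
  have xn: "xfun n q (subst_pi1 n q (subst_pn n q (a, b))) c (n+1) = (\<Prod>l=1..n. 1 - B l) * suminf tn"
    unfolding xfun_def Let_def tn_def A_def B_def A2_def B2_def by simp
  obtain m where nm: "n = Suc m" using n1 by (cases n) auto
  have m1: "n - 1 = m" using nm by simp
  have pfN: "(\<Prod>l=1..n. 1 - Bf l) = Pb * (1 - Bn)"
  proof -
    have "(\<Prod>l=1..n. 1 - Bf l) = (\<Prod>l=1..m. 1 - Bf l) * (1 - Bf n)"
      using prod.cl_ivl_Suc[of "\<lambda>l. 1 - Bf l" 1 m] nm by simp
    also have "(\<Prod>l=1..m. 1 - Bf l) = Pb" unfolding Pb_def m1
      by (rule prod.cong[OF refl]) (use Bfv m1 in auto)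
    finally show ?thesis using Bfv by simp
  qed
  have pfn: "(\<Prod>l=1..n. 1 - B l) = (1 - Bn / q) * Pb"
  proof -
    have "(\<Prod>l=1..n. 1 - B l) = (1 - B 1) * (\<Prod>l=1..m. 1 - B (Suc l))"
      using P1[of "\<lambda>l. 1 - B l" m] nm by simp
    also have "(\<Prod>l=1..m. 1 - B (Suc l)) = Pb" unfolding Pb_def m1
      by (rule prod.cong[OF refl]) (use Bv m1 in auto)
    finally show ?thesis using B1 by simp
  qed
  have tN_eq: "tN k = R k * (qpoch An1 q k / qpoch Bn q k)" for k
  proof -
    have "tN k = q^k * c^k * ((\<Prod>l=1..m. qpoch (a l) q k / qpoch (Bf l) q k) * (qpoch (a n) q k / qpoch (Bf n) q k)
                * (qpoch (a (Suc n)) q k / qpoch (Bf (Suc n)) q k))"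
      unfolding tN_def using P5[of 0 n "\<lambda>l. qpoch (a l) q k / qpoch (Bf l) q k"] nm by simp
    also have "(\<Prod>l=1..m. qpoch (a l) q k / qpoch (Bf l) q k) = Q k" unfolding Q_def m1
      by (rule prod.cong[OF refl]) (use Bfv m1 in auto)
    finally show ?thesis unfolding R_def using Bfv An1_def
      by (simp add: times_divide_times_eq mult_ac)
  qed
  have tn_eq: "tn k = R k * (qpoch (An1 / q) q k / qpoch (Bn / q) q k)" for k
  proof -
    have "tn k = q^k * c^k * ((qpoch (A 1) q k / qpoch (B 1) q k) * ((\<Prod>l=1..m. qpoch (A (Suc l)) q k / qpoch (B (Suc l)) q k)
                * (qpoch (A (Suc n)) q k / qpoch (B (Suc n)) q k)))"
      unfolding tn_def using P1[of "\<lambda>l. qpoch (A l) q k / qpoch (B l) q k" n]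
        prod.cl_ivl_Suc[of "\<lambda>l. qpoch (A (Suc l)) q k / qpoch (B (Suc l)) q k" 1 m] nm by simp
    also have "(\<Prod>l=1..m. qpoch (A (Suc l)) q k / qpoch (B (Suc l)) q k) = Q k" unfolding Q_def m1
      by (rule prod.cong[OF refl]) (use Av' Bv m1 in auto)
    finally show ?thesis unfolding R_def using A1 B1 An Bn1
      by (simp add: times_divide_times_eq mult_ac)
  qed
  have qqnz: "qpoch q q k \<noteq> 0" for k by (rule qpoch_nz) (use one_minus_qpow[OF nq] in auto)
  have qBnz: "qpoch Bn q k \<noteq> 0" for k by (rule qpoch_nz) (use bnk Bn_def in auto)
  have bnk': "1 - q^k * Bn \<noteq> 0" for k using bnk Bn_def by auto
  define G where "G k = (1 - Bn) * (Pb * R (Suc k)) * qpoch An1 q k * (1 - q^k * q) / (qpoch Bn q k * (1 - q^k * Bn))" for k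
  define N where "N k = (1 - Bn) * (Pb * R k) * (qpoch An1 q k / qpoch Bn q k)" for k
  define T where "T k = (1 - Bn / q) * (Pb * R k) * (qpoch (An1 / q) q k / qpoch (Bn / q) q k)" for k
  have g_eq: "q * c * (\<Prod>l=1..n. 1 - a l) * t1 k = G k" for k
  proof -
    have t1': "t1 k = q^k * c^k * (\<Prod>l=1..n. qpoch (q * a l) q k / qpoch (q * Bf l) q k) * (qpoch An1 q k / qpoch q q k)"
      unfolding t1_def using Bfv An1_def by simp
    have "(\<Prod>l=1..n. 1 - a l) * (\<Prod>l=1..n. qpoch (q * a l) q k / qpoch (q * Bf l) q k)
       = (\<Prod>l=1..n. 1 - Bf l) * (\<Prod>l=1..n. qpoch (a l) q (Suc k) / qpoch (Bf l) q (Suc k))"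
      by (rule prod_shift_q) (use Bf1 in auto)
    also have "(\<Prod>l=1..n. qpoch (a l) q (Suc k) / qpoch (Bf l) q (Suc k))
       = (\<Prod>l=1..m. qpoch (a l) q (Suc k) / qpoch (Bf l) q (Suc k)) * (qpoch (a n) q (Suc k) / qpoch (Bf n) q (Suc k))"
      using prod.cl_ivl_Suc[of "\<lambda>l. qpoch (a l) q (Suc k) / qpoch (Bf l) q (Suc k)" 1 m] nm by simp
    also have "(\<Prod>l=1..m. qpoch (a l) q (Suc k) / qpoch (Bf l) q (Suc k)) = Q (Suc k)" unfolding Q_def m1
      by (rule prod.cong[OF refl]) (use Bfv m1 in auto)
    finally have pp: "(\<Prod>l=1..n. 1 - a l) * (\<Prod>l=1..n. qpoch (q * a l) q k / qpoch (q * Bf l) q k)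
       = Pb * (1 - Bn) * (Q (Suc k) * (qpoch (a n) q (Suc k) / qpoch Bn q (Suc k)))" unfolding pfN Bfv .
    have "q * c * (\<Prod>l=1..n. 1 - a l) * t1 k = q * c * q^k * c^k * (qpoch An1 q k / qpoch q q k) *
        ((\<Prod>l=1..n. 1 - a l) * (\<Prod>l=1..n. qpoch (q * a l) q k / qpoch (q * Bf l) q k))"
      unfolding t1' by (simp only: mult_ac)
    also have "\<dots> = G k" unfolding pp G_def R_def qpoch_Suc[of q q k] qpoch_Suc[of Bn q k] power_Suc
      by (rule alg_g) (use qqnz[of k] qBnz[of k] bnk'[of k] one_minus_qpow[OF nq, of k] in auto)
    finally show ?thesis .
  qed
  have sG: "G sums (q * c * xfun n q (a,b) c 1)"
  proof -
    have "(\<lambda>k. (q * c * (\<Prod>l=1..n. 1 - a l)) * t1 k) sums ((q * c * (\<Prod>l=1..n. 1 - a l)) * suminf t1)"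
      by (rule sums_mult[OF summable_sums[OF s1]])
    then show ?thesis unfolding x1 using g_eq by (simp add: mult.assoc)
  qed
  have sN: "N sums (xfun n q (a,b) c (n+1))"
  proof -
    have "(\<lambda>k. (Pb * (1 - Bn)) * tN k) sums ((Pb * (1 - Bn)) * suminf tN)"
      by (rule sums_mult[OF summable_sums[OF sN]])
    moreover have "(\<lambda>k. (Pb * (1 - Bn)) * tN k) = N" unfolding N_def tN_eq by (rule ext) (simp add: mult_ac)
    ultimately show ?thesis unfolding xN pfN by simp
  qed
  have Teq: "T = (\<lambda>k. ((1 - Bn / q) * Pb) * tn k)" unfolding T_def tn_eq by (rule ext) (simp add: mult_ac)
  define K where "K = (1 - inverse q * An1) / (1 - Bn)"
  define \<alpha> where "\<alpha> = (Bn - An1) / (q - An1)"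
  define \<beta> where "\<beta> = (q - Bn) / (q - An1) * inverse q * inverse c * (q * c)"
  have Tstep: "T (Suc k) = K * (\<alpha> * G k + \<beta> * N (Suc k))" for k
  proof -
    have e1: "qpoch (An1/q) q (Suc k) = (1 - An1/q) * qpoch An1 q k" using q0 by (simp add: qpoch_Suc')
    have e2: "qpoch (Bn/q) q (Suc k) = (1 - Bn/q) * qpoch Bn q k" using q0 by (simp add: qpoch_Suc')
    have "T (Suc k) = (1 - Bn/q) * (Pb * R (Suc k)) * ((1 - An1/q) * qpoch An1 q k / ((1 - Bn/q) * qpoch Bn q k))"
      unfolding T_def e1 e2 ..
    also have "\<dots> = K * (\<alpha> * ((1 - Bn) * (Pb * R (Suc k)) * qpoch An1 q k * (1 - q^k * q) / (qpoch Bn q k * (1 - q^k * Bn)))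
        + (q - Bn) / (q - An1) * inverse q * inverse c * (q * c) * ((1 - Bn) * (Pb * R (Suc k)) * (qpoch An1 q k * (1 - q^k * An1)) / (qpoch Bn q k * (1 - q^k * Bn))))"
      unfolding K_def \<alpha>_def
      by (rule term_id) (use q0 bnq bl[of n] n1 aq qBnz[of k] bnk'[of k] one_minus_qpow[OF nq, of k] c0 Bn_def An1_def in auto)
    also have "\<dots> = K * (\<alpha> * G k + \<beta> * N (Suc k))"
      unfolding G_def N_def \<beta>_def qpoch_Suc[of An1 q k] qpoch_Suc[of Bn q k]
      by (simp only: times_divide_times_eq times_divide_eq_right mult.assoc)
    finally show ?thesis .
  qed
  have icq: "\<And>W. W * inverse q * inverse c * (q * c) = W" using q0 c0 by (simp add: field_simps)
  have b': "\<beta> = (q - Bn) / (q - An1)" unfolding \<beta>_def icq ..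
  have qa: "q - An1 \<noteq> 0" "1 - Bn \<noteq> 0" using aq bl[of n] n1 An1_def Bn_def by auto
  have kb: "K * \<beta> * (1 - Bn) = 1 - Bn / q"
    unfolding K_def b' by (rule alg_kb[OF q0 qa])
  have T0: "T 0 = K * \<beta> * N 0"
    unfolding T_def N_def using kb by (simp add: mult_ac)
  have sT: "T sums (K * (\<alpha> * (q * c * xfun n q (a,b) c 1) + \<beta> * xfun n q (a,b) c (n+1)))"
    by (rule sum_comb[OF sG sN Tstep T0])
  have sT2: "T sums (xfun n q (subst_pi1 n q (subst_pn n q (a, b))) c (n+1))"
    unfolding Teq xn pfn by (rule sums_mult[OF summable_sums[OF sn]])
  have "xfun n q (subst_pi1 n q (subst_pn n q (a, b))) c (n+1) =
        K * (\<alpha> * (q * c * xfun n q (a,b) c 1) + \<beta> * xfun n q (a,b) c (n+1))"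
    using sums_unique2[OF sT2 sT] .
  then show ?thesis unfolding K_def \<alpha>_def \<beta>_def An1_def Bn_def by (simp add: algebra_simps)
qed

theorem lemma4p3:
  fixes n :: nat and q c :: complex and a b :: "nat \<Rightarrow> complex"
  assumes "n \<ge> 1"
    and "q \<noteq> 0" and "norm q < 1"
    and "c \<noteq> 0" and "norm c < 1 / norm q"
    and "\<forall>l\<in>{1..n}. \<forall>m::int. b l \<noteq> q powi m"
    and "a (n + 1) \<noteq> q"
    and "b n / q \<notin> \<real>\<^sub>\<le>\<^sub>0"
    and "j \<in> {1..n + 1}"
  shows "xfun n q (subst_pi1 n q (subst_pn n q (a, b))) c j =
         (1 - inverse q * a (n + 1)) / (1 - b n) *
         mat_vec n (mat_mult n (M_pi1 n q (subst_pn n q (a, b)) c) (M_pn n q (a, b) c))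
                   (xfun n q (a, b) c) j"
proof -
  note n1 = assms(1) and q0 = assms(2) and nq = assms(3) and c0 = assms(4)
  have bl: "\<And>l. l \<in> {1..n} \<Longrightarrow> b l \<noteq> 1" using assms(6) by (metis power_int_0_right)
  have bnq: "b n \<noteq> q" using assms(6) n1 by (metis atLeastAtMost_iff order_refl power_int_1_right)
  have bnk: "1 - q^k * b n \<noteq> 0" for k
  proof
    assume "1 - q^k * b n = 0"
    then have "b n = q powi (- int k)" using q0 by (simp add: power_int_minus field_simps)
    then show False using assms(6) n1 by auto
  qed
  have bn0: "b n \<noteq> 0" using assms(8) by auto
  have nqc: "norm (q * c) < 1"
  proof -
    have "norm q > 0" using q0 by simp
    then have "norm q * norm c < norm q * (1 / norm q)" using assms(5) by (intro mult_strict_left_mono)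
    then show ?thesis using q0 by (simp add: norm_mult)
  qed
  define s1 where "s1 = qcpow q c (b n / q)"
  define s2 where "s2 = qcpow q c (bfull n q (snd (subst_pn n q (a, b))) n / q)"
  have s12: "s2 * s1 = 1"
  proof -
    have "bfull n q (snd (subst_pn n q (a, b))) n / q = inverse (b n / q)"
      using q0 bn0 by (simp add: bfull_def p1_snd_n field_simps)
    then have "Ln (bfull n q (snd (subst_pn n q (a, b))) n / q) = - Ln (b n / q)"
      using Ln_inverse[OF assms(8)] by simp
    then show ?thesis unfolding s1_def s2_def qcpow_def by (simp add: exp_add[symmetric] field_simps)
  qed
  define x where "x = xfun n q (a, b) c"
  have main: "mat_vec n (mat_mult n (M_pi1 n q (subst_pn n q (a, b)) c) (M_pn n q (a, b) c)) x j
     = s2 * (if j \<le> n then mat_vec n (M_pn n q (a, b) c) x (j+1) else q * c * mat_vec n (M_pn n q (a, b) c) x 1)"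
    unfolding mv_mm s2_def by (rule mv_pi1[OF n1 assms(9)])
  show ?thesis
  proof (cases "j \<le> n")
    case True
    have y: "mat_vec n (M_pn n q (a, b) c) x (j+1) = s1 * x (j+1)"
      unfolding s1_def using mv_pn[OF n1, of "j+1"] True assms(9) by auto
    have "xfun n q (subst_pi1 n q (subst_pn n q (a, b))) c (n - (n - j)) =
       (1 - inverse q * a (n+1)) / (1 - b n) * xfun n q (a,b) c (n - (n - j) + 1)"
      by (rule case_lt[where n=n and q=q and b=b, OF n1 q0 bn0]) (use bl[of n] n1 True assms(9) in auto)
    moreover have "n - (n - j) = j" using True by simp
    ultimately show ?thesis unfolding x_def[symmetric] main y using True s12
      by (simp add: mult.assoc[symmetric])
  next
    case False
    then have jn: "j = n + 1" using assms(9) by simp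
    have y: "mat_vec n (M_pn n q (a, b) c) x 1 = s1 * ((b n - a (n + 1)) / (q - a (n + 1)) * x 1
        + (q - b n) / (q - a (n + 1)) * inverse q * inverse c * x (n+1))"
      unfolding s1_def using mv_pn[OF n1, of 1] by auto
    have "xfun n q (subst_pi1 n q (subst_pn n q (a, b))) c (n+1) =
     (1 - inverse q * a (n + 1)) / (1 - b n) * (q * c * ((b n - a (n + 1)) / (q - a (n + 1)) * x 1
        + (q - b n) / (q - a (n + 1)) * inverse q * inverse c * x (n+1)))"
      unfolding x_def by (rule case_n1[where n=n and q=q and b=b and c=c and a=a, OF n1 q0 nq c0 nqc bl bnq bnk bn0 assms(7)])
    then show ?thesis unfolding x_def[symmetric] main y using False jn s12
      by (simp add: mult_ac)
  qed
qed

end
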